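(* Let $A,B,C,D,E\in\mathbb{C}$ with $E\neq0$ and $M=\{(x,y,z)\in\mathbb{C}^3 : x^2+y^2+z^2+Exyz-Ax-By-Cz-D=0\}$. The vector fields \begin{align*} V^x&=(2z+Exy-C)\tfrac{\partial}{\partial y}-(2y+Exz-B)\tfrac{\partial}{\partial z},\\ V^y&=-(2z+Exy-C)\tfrac{\partial}{\partial x}+(2x+Eyz-A)\tfrac{\partial}{\partial z},\\ V^z&=(2y+Exz-B)\tfrac{\partial}{\partial x}-(2x+Eyz-A)\tfrac{\partial}{\partial y} \end{align*} are tangent to $M$, and each of them is complete on $M$ (its flow exists for all complex times). *)

theory Defs
  imports "HOL-Analysis.Analysis"
begin

type_synonym c3 = "complex \<times> complex \<times> complex"

definition Fcub :: "complex \<Rightarrow> complex \<Rightarrow> complex \<Rightarrow> complex \<Rightarrow> complex \<Rightarrow> c3 \<Rightarrow> complex" where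
  "Fcub A B C D E = (\<lambda>(x, y, z). x^2 + y^2 + z^2 + E*x*y*z - A*x - B*y - C*z - D)"

definition Msurf :: "complex \<Rightarrow> complex \<Rightarrow> complex \<Rightarrow> complex \<Rightarrow> complex \<Rightarrow> c3 set" where
  "Msurf A B C D E = {p. Fcub A B C D E p = 0}"

text \<open>Vector fields, given by their component triples (coefficients of d/dx, d/dy, d/dz).\<close>
definition Vx :: "complex \<Rightarrow> complex \<Rightarrow> complex \<Rightarrow> complex \<Rightarrow> c3 \<Rightarrow> c3" where
  "Vx A B C E = (\<lambda>(x, y, z). (0, 2*z + E*x*y - C, -(2*y + E*x*z - B)))"

definition Vy :: "complex \<Rightarrow> complex \<Rightarrow> complex \<Rightarrow> complex \<Rightarrow> c3 \<Rightarrow> c3" where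
  "Vy A B C E = (\<lambda>(x, y, z). (-(2*z + E*x*y - C), 0, 2*x + E*y*z - A))"

definition Vz :: "complex \<Rightarrow> complex \<Rightarrow> complex \<Rightarrow> complex \<Rightarrow> c3 \<Rightarrow> c3" where
  "Vz A B C E = (\<lambda>(x, y, z). (2*y + E*x*z - B, -(2*x + E*y*z - A), 0))"

definition tangent_to :: "(c3 \<Rightarrow> complex) \<Rightarrow> (c3 \<Rightarrow> c3) \<Rightarrow> c3 set \<Rightarrow> bool" where
  "tangent_to F V S \<longleftrightarrow> (\<forall>p\<in>S. \<exists>dF. (F has_derivative dF) (at p) \<and> dF (V p) = 0)"

definition complete_on :: "(c3 \<Rightarrow> c3) \<Rightarrow> c3 set \<Rightarrow> bool" where
  "complete_on V S \<longleftrightarrow>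
     (\<forall>p\<in>S. \<exists>x y z :: complex \<Rightarrow> complex.
        (x 0, y 0, z 0) = p \<and>
        (\<forall>t. (x t, y t, z t) \<in> S \<and>
             (x has_field_derivative fst (V (x t, y t, z t))) (at t) \<and>
             (y has_field_derivative fst (snd (V (x t, y t, z t)))) (at t) \<and>
             (z has_field_derivative snd (snd (V (x t, y t, z t)))) (at t)))"

end

theory Submission
  imports Defs
begin

lemma csq_exists:
  fixes w :: complex
  shows "\<exists>c s q :: complex \<Rightarrow> complex. c 0 = 1 \<and> s 0 = 0 \<and> q 0 = 0 \<and>
    (\<forall>t. (c has_field_derivative w * s t) (at t) \<and> (s has_field_derivative c t) (at t)
       \<and> (q has_field_derivative s t) (at t) \<and> c t = 1 + w * q t)"
proof (cases "w = 0")
  case True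
  show ?thesis
    apply (rule exI[of _ "\<lambda>t. 1"], rule exI[of _ "\<lambda>t. t"], rule exI[of _ "\<lambda>t. t^2/2"])
    using True by (auto intro!: derivative_eq_intros)
next
  case False
  define r where "r = csqrt w"
  have r2: "r * r = w" unfolding r_def by (metis power2_csqrt power2_eq_square)
  have r0: "r \<noteq> 0" using r2 False by auto
  define c where "c = (\<lambda>t. (exp (r*t) + exp (-(r*t)))/2)"
  define s where "s = (\<lambda>t. (exp (r*t) - exp (-(r*t)))/(2*r))"
  define q where "q = (\<lambda>t. (c t - 1)/w)"
  show ?thesis
  proof (rule exI[of _ c], rule exI[of _ s], rule exI[of _ q], intro conjI allI)
    show "c 0 = 1" "s 0 = 0" "q 0 = 0" by (auto simp: c_def s_def q_def)
  next
    fix t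
    show "(c has_field_derivative w * s t) (at t)"
      unfolding c_def s_def using r0
      by (auto intro!: derivative_eq_intros simp: r2[symmetric] field_simps)
    show "(s has_field_derivative c t) (at t)"
      unfolding c_def s_def using r0
      by (auto intro!: derivative_eq_intros simp: field_simps)
    have "(c has_field_derivative w * s t) (at t)"
      unfolding c_def s_def using r0
      by (auto intro!: derivative_eq_intros simp: r2[symmetric] field_simps)
    then show "(q has_field_derivative s t) (at t)"
      unfolding q_def using False
      by (auto intro!: derivative_eq_intros)
    show "c t = 1 + w * q t" unfolding q_def using False by auto
  qed
qed

lemma lin2:
  fixes a b g e1 e2 p1 p2 :: complex
  shows "\<exists>u1 u2 :: complex \<Rightarrow> complex. u1 0 = p1 \<and> u2 0 = p2 \<and>
    (\<forall>t. (u1 has_field_derivative a*u1 t + b*u2 t + e1) (at t)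
       \<and> (u2 has_field_derivative g*u1 t - a*u2 t + e2) (at t))"
proof -
  define w where "w = a^2 + b*g"
  obtain c s q :: "complex \<Rightarrow> complex" where c0: "c 0 = 1" and s0: "s 0 = 0" and q0: "q 0 = 0"
    and D: "\<And>t. (c has_field_derivative w * s t) (at t) \<and> (s has_field_derivative c t) (at t)
       \<and> (q has_field_derivative s t) (at t) \<and> c t = 1 + w * q t"
    using csq_exists[of w] by blast
  define u1 where "u1 = (\<lambda>t. c t * p1 + s t * (a*p1 + b*p2 + e1) + q t * (a*e1 + b*e2))"
  define u2 where "u2 = (\<lambda>t. c t * p2 + s t * (g*p1 - a*p2 + e2) + q t * (g*e1 - a*e2))"
  show ?thesis
  proof (rule exI[of _ u1], rule exI[of _ u2], intro conjI allI)
    show "u1 0 = p1" "u2 0 = p2" by (auto simp: u1_def u2_def c0 s0 q0)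
  next
    fix t
    have dc: "(c has_field_derivative w * s t) (at t)" and ds: "(s has_field_derivative c t) (at t)"
      and dq: "(q has_field_derivative s t) (at t)" and ce: "c t = 1 + w * q t" using D[of t] by blast+
    have "(u1 has_field_derivative
        w * s t * p1 + c t * (a*p1 + b*p2 + e1) + s t * (a*e1 + b*e2)) (at t)"
      unfolding u1_def by (auto intro!: derivative_eq_intros dc ds dq)
    moreover have "w * s t * p1 + c t * (a*p1 + b*p2 + e1) + s t * (a*e1 + b*e2)
        = a*u1 t + b*u2 t + e1"
      unfolding u1_def u2_def ce w_def by (simp add: algebra_simps power2_eq_square)
    ultimately show "(u1 has_field_derivative a*u1 t + b*u2 t + e1) (at t)" by simp
    have "(u2 has_field_derivative
        w * s t * p2 + c t * (g*p1 - a*p2 + e2) + s t * (g*e1 - a*e2)) (at t)"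
      unfolding u2_def by (auto intro!: derivative_eq_intros dc ds dq)
    moreover have "w * s t * p2 + c t * (g*p1 - a*p2 + e2) + s t * (g*e1 - a*e2)
        = g*u1 t - a*u2 t + e2"
      unfolding u1_def u2_def ce w_def by (simp add: algebra_simps power2_eq_square)
    ultimately show "(u2 has_field_derivative g*u1 t - a*u2 t + e2) (at t)" by simp
  qed
qed

lemma conserve:
  fixes x y z X Y Z :: "complex \<Rightarrow> complex"
  assumes d: "\<And>t. (x has_field_derivative X t) (at t) \<and> (y has_field_derivative Y t) (at t)
       \<and> (z has_field_derivative Z t) (at t)"
    and o: "\<And>t. (2*x t + E*y t*z t - A)*X t + (2*y t + E*x t*z t - B)*Y t
       + (2*z t + E*x t*y t - C)*Z t = 0"
  shows "Fcub A B C D E (x t, y t, z t) = Fcub A B C D E (x 0, y 0, z 0)"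
proof -
  define f where "f = (\<lambda>t. Fcub A B C D E (x t, y t, z t))"
  have ff: "f = (\<lambda>t. x t^2 + y t^2 + z t^2 + E*x t*y t*z t - A*x t - B*y t - C*z t - D)"
    unfolding f_def Fcub_def by auto
  have "(f has_field_derivative 0) (at t within UNIV)" for t
  proof -
    have dx: "(x has_field_derivative X t) (at t)" and dy: "(y has_field_derivative Y t) (at t)"
      and dz: "(z has_field_derivative Z t) (at t)" using d by auto
    have "(f has_field_derivative
       2*x t*X t + 2*y t*Y t + 2*z t*Z t + E*(X t*y t*z t + x t*Y t*z t + x t*y t*Z t)
       - A*X t - B*Y t - C*Z t) (at t)"
      unfolding ff by (auto intro!: derivative_eq_intros dx dy dz simp: algebra_simps)
    moreover have "2*x t*X t + 2*y t*Y t + 2*z t*Z t + E*(X t*y t*z t + x t*Y t*z t + x t*y t*Z t)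
       - A*X t - B*Y t - C*Z t = 0"
      using o[of t] by (simp add: algebra_simps)
    ultimately show ?thesis by simp
  qed
  then obtain k where "\<forall>t\<in>UNIV. f t = k"
    using has_field_derivative_zero_constant[of UNIV f] by auto
  then show ?thesis unfolding f_def by auto
qed

lemma tang:
  fixes V :: "c3 \<Rightarrow> c3" and S :: "c3 set"
  assumes "\<And>x y z. (2*x + E*y*z - A)* fst (V (x,y,z)) + (2*y + E*x*z - B)* fst (snd (V (x,y,z)))
       + (2*z + E*x*y - C)* snd (snd (V (x,y,z))) = 0"
  shows "tangent_to (Fcub A B C D E) V S"
  unfolding tangent_to_def
proof
  fix p :: c3
  obtain x0 y0 z0 where p: "p = (x0,y0,z0)" by (cases p) auto
  have F: "Fcub A B C D E = (\<lambda>v. (fst v)^2 + (fst (snd v))^2 + (snd (snd v))^2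
     + E * (fst v) * (fst (snd v)) * (snd (snd v)) - A * (fst v) - B * (fst (snd v)) - C * (snd (snd v)) - D)"
    unfolding Fcub_def by auto
  define dF where "dF = (\<lambda>h::c3. (2*x0 + E*y0*z0 - A)* fst h + (2*y0 + E*x0*z0 - B)* fst (snd h)
       + (2*z0 + E*x0*y0 - C)* snd (snd h))"
  have "(Fcub A B C D E has_derivative dF) (at p)"
    unfolding F dF_def p
    apply (rule has_derivative_eq_rhs)
     apply (rule derivative_eq_intros | simp)+
    apply (rule ext)
    apply (simp add: algebra_simps power2_eq_square)
    done
  moreover have "dF (V p) = 0" unfolding dF_def p using assms[of x0 y0 z0] by simp
  ultimately show "\<exists>dF. (Fcub A B C D E has_derivative dF) (at p) \<and> dF (V p) = 0" by blast
qed

theorem lemma2p1: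
  fixes A B C D E :: complex
  assumes "E \<noteq> 0"
  shows "tangent_to (Fcub A B C D E) (Vx A B C E) (Msurf A B C D E)
       \<and> tangent_to (Fcub A B C D E) (Vy A B C E) (Msurf A B C D E)
       \<and> tangent_to (Fcub A B C D E) (Vz A B C E) (Msurf A B C D E)
       \<and> complete_on (Vx A B C E) (Msurf A B C D E)
       \<and> complete_on (Vy A B C E) (Msurf A B C D E)
       \<and> complete_on (Vz A B C E) (Msurf A B C D E)"
proof -
  have T1: "tangent_to (Fcub A B C D E) (Vx A B C E) (Msurf A B C D E)"
    by (rule tang) (simp add: Vx_def algebra_simps)
  have T2: "tangent_to (Fcub A B C D E) (Vy A B C E) (Msurf A B C D E)"
    by (rule tang) (simp add: Vy_def algebra_simps)
  have T3: "tangent_to (Fcub A B C D E) (Vz A B C E) (Msurf A B C D E)"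
    by (rule tang) (simp add: Vz_def algebra_simps)
  have C1: "complete_on (Vx A B C E) (Msurf A B C D E)"
    unfolding complete_on_def
  proof
    fix p assume pM: "p \<in> Msurf A B C D E"
    obtain x0 y0 z0 where p: "p = (x0,y0,z0)" by (cases p) auto
    obtain u1 u2 where u: "u1 0 = y0" "u2 0 = z0" and
      du: "\<And>t. (u1 has_field_derivative (E*x0)*u1 t + 2*u2 t + -C) (at t)
       \<and> (u2 has_field_derivative (-2)*u1 t - (E*x0)*u2 t + B) (at t)"
      using lin2[of y0 z0 "E*x0" 2 "-C" "-2" B] by blast
    define x where "x = (\<lambda>t::complex. x0)"
    have d: "(x has_field_derivative fst (Vx A B C E (x t, u1 t, u2 t))) (at t) \<and>
             (u1 has_field_derivative fst (snd (Vx A B C E (x t, u1 t, u2 t)))) (at t) \<and>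
             (u2 has_field_derivative snd (snd (Vx A B C E (x t, u1 t, u2 t)))) (at t)" for t
      using du[of t] unfolding x_def by (auto simp: Vx_def algebra_simps intro!: derivative_eq_intros)
    have Fe: "Fcub A B C D E (x t, u1 t, u2 t) = Fcub A B C D E (x 0, u1 0, u2 0)" for t
      by (rule conserve[OF d]) (simp add: Vx_def algebra_simps)
    have mem: "(x t, u1 t, u2 t) \<in> Msurf A B C D E" for t
      using pM Fe unfolding Msurf_def p x_def u by simp
    show "\<exists>x y z. (x 0, y 0, z 0) = p \<and> (\<forall>t. (x t, y t, z t) \<in> Msurf A B C D E \<and>
      (x has_field_derivative fst (Vx A B C E (x t, y t, z t))) (at t) \<and>
      (y has_field_derivative fst (snd (Vx A B C E (x t, y t, z t)))) (at t) \<and>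
      (z has_field_derivative snd (snd (Vx A B C E (x t, y t, z t)))) (at t))"
      apply (rule exI[of _ x], rule exI[of _ u1], rule exI[of _ u2])
      using d u p mem by (simp add: x_def)
  qed
  have C2: "complete_on (Vy A B C E) (Msurf A B C D E)"
    unfolding complete_on_def
  proof
    fix p assume pM: "p \<in> Msurf A B C D E"
    obtain x0 y0 z0 where p: "p = (x0,y0,z0)" by (cases p) auto
    obtain u1 u2 where u: "u1 0 = x0" "u2 0 = z0" and
      du: "\<And>t. (u1 has_field_derivative (-(E*y0))*u1 t + (-2)*u2 t + C) (at t)
       \<and> (u2 has_field_derivative 2*u1 t - (-(E*y0))*u2 t + -A) (at t)"
      using lin2[of x0 z0 "-(E*y0)" "-2" C 2 "-A"] by blast
    define y where "y = (\<lambda>t::complex. y0)"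
    have d: "(u1 has_field_derivative fst (Vy A B C E (u1 t, y t, u2 t))) (at t) \<and>
             (y has_field_derivative fst (snd (Vy A B C E (u1 t, y t, u2 t)))) (at t) \<and>
             (u2 has_field_derivative snd (snd (Vy A B C E (u1 t, y t, u2 t)))) (at t)" for t
      using du[of t] unfolding y_def by (auto simp: Vy_def algebra_simps intro!: derivative_eq_intros)
    have Fe: "Fcub A B C D E (u1 t, y t, u2 t) = Fcub A B C D E (u1 0, y 0, u2 0)" for t
      by (rule conserve[OF d]) (simp add: Vy_def algebra_simps)
    have mem: "(u1 t, y t, u2 t) \<in> Msurf A B C D E" for t
      using pM Fe unfolding Msurf_def p y_def u by simp
    show "\<exists>x y z. (x 0, y 0, z 0) = p \<and> (\<forall>t. (x t, y t, z t) \<in> Msurf A B C D E \<and>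
      (x has_field_derivative fst (Vy A B C E (x t, y t, z t))) (at t) \<and>
      (y has_field_derivative fst (snd (Vy A B C E (x t, y t, z t)))) (at t) \<and>
      (z has_field_derivative snd (snd (Vy A B C E (x t, y t, z t)))) (at t))"
      apply (rule exI[of _ u1], rule exI[of _ y], rule exI[of _ u2])
      using d u p mem by (simp add: y_def)
  qed
  have C3: "complete_on (Vz A B C E) (Msurf A B C D E)"
    unfolding complete_on_def
  proof
    fix p assume pM: "p \<in> Msurf A B C D E"
    obtain x0 y0 z0 where p: "p = (x0,y0,z0)" by (cases p) auto
    obtain u1 u2 where u: "u1 0 = x0" "u2 0 = y0" and
      du: "\<And>t. (u1 has_field_derivative (E*z0)*u1 t + 2*u2 t + -B) (at t)
       \<and> (u2 has_field_derivative (-2)*u1 t - (E*z0)*u2 t + A) (at t)"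
      using lin2[of x0 y0 "E*z0" 2 "-B" "-2" A] by blast
    define z where "z = (\<lambda>t::complex. z0)"
    have d: "(u1 has_field_derivative fst (Vz A B C E (u1 t, u2 t, z t))) (at t) \<and>
             (u2 has_field_derivative fst (snd (Vz A B C E (u1 t, u2 t, z t)))) (at t) \<and>
             (z has_field_derivative snd (snd (Vz A B C E (u1 t, u2 t, z t)))) (at t)" for t
      using du[of t] unfolding z_def by (auto simp: Vz_def algebra_simps intro!: derivative_eq_intros)
    have Fe: "Fcub A B C D E (u1 t, u2 t, z t) = Fcub A B C D E (u1 0, u2 0, z 0)" for t
      by (rule conserve[OF d]) (simp add: Vz_def algebra_simps)
    have mem: "(u1 t, u2 t, z t) \<in> Msurf A B C D E" for t
      using pM Fe unfolding Msurf_def p z_def u by simp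
    show "\<exists>x y z. (x 0, y 0, z 0) = p \<and> (\<forall>t. (x t, y t, z t) \<in> Msurf A B C D E \<and>
      (x has_field_derivative fst (Vz A B C E (x t, y t, z t))) (at t) \<and>
      (y has_field_derivative fst (snd (Vz A B C E (x t, y t, z t)))) (at t) \<and>
      (z has_field_derivative snd (snd (Vz A B C E (x t, y t, z t)))) (at t))"
      apply (rule exI[of _ u1], rule exI[of _ u2], rule exI[of _ z])
      using d u p mem by (simp add: z_def)
  qed
  show ?thesis using T1 T2 T3 C1 C2 C3 by blast
qed

end
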